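(* Let $g(x)=\dfrac{1}{1-\cos(x)}$ for $x\in(0,2\pi)$. Then $g$ is completely monotonic on $(0,\pi]$ and absolutely monotonic on $[\pi,2\pi)$.
   Context: A function $f:I\to\mathbb{R}$ on an interval $I\subset\mathbb{R}$ is completely monotonic if it has derivatives of all orders and $(-1)^n f^{(n)}(x)\ge 0$ for all $n=0,1,2,\dots$ and $x\in I$; it is absolutely monotonic if it has derivatives of all orders and $f^{(n)}(x)\ge 0$ for all $n=0,1,2,\dots$ and $x\in I$. *)

theory Defs
  imports Complex_Main
begin

text \<open>Derivatives of all orders on an interval I are given by a sequence of functions D,
  with D 0 = f on I and D (Suc n) the derivative of D n at every point of I
  (taken within I, so one-sided at closed endpoints).\<close>

definition has_all_derivs_on :: "(real \<Rightarrow> real) \<Rightarrow> (nat \<Rightarrow> real \<Rightarrow> real) \<Rightarrow> real set \<Rightarrow> bool" where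
  "has_all_derivs_on f D I \<longleftrightarrow>
     (\<forall>x\<in>I. D 0 x = f x) \<and>
     (\<forall>n. \<forall>x\<in>I. (D n has_real_derivative D (Suc n) x) (at x within I))"

definition completely_monotonic_on :: "(real \<Rightarrow> real) \<Rightarrow> real set \<Rightarrow> bool" where
  "completely_monotonic_on f I \<longleftrightarrow>
     (\<exists>D. has_all_derivs_on f D I \<and> (\<forall>n. \<forall>x\<in>I. (-1::real)^n * D n x \<ge> 0))"

definition absolutely_monotonic_on :: "(real \<Rightarrow> real) \<Rightarrow> real set \<Rightarrow> bool" where
  "absolutely_monotonic_on f I \<longleftrightarrow>
     (\<exists>D. has_all_derivs_on f D I \<and> (\<forall>n. \<forall>x\<in>I. D n x \<ge> 0))"

end

theory Submission
  imports Defs "HOL-Computational_Algebra.Polynomial"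
begin

fun QQ :: "nat \<Rightarrow> real poly" where
  "QQ 0 = [:1/2,0,1/2:]"
| "QQ (Suc n) = pderiv (QQ n) * [:1/2,0,1/2:]"

lemma base_coeff_nonneg: "coeff [:1/2,0,1/2::real:] k \<ge> 0"
  by (cases k; cases "k - 1"; cases "k - 2") (auto simp: coeff_pCons')

lemma QQ_coeff_nonneg: "coeff (QQ n) i \<ge> 0"
proof (induction n arbitrary: i)
  case 0
  then show ?case using base_coeff_nonneg by simp
next
  case (Suc n)
  show ?case
    unfolding QQ.simps coeff_mult
    by (intro sum_nonneg mult_nonneg_nonneg base_coeff_nonneg)
       (simp add: coeff_pderiv Suc.IH)
qed

lemma QQ_nonneg: "(y::real) \<ge> 0 \<Longrightarrow> poly (QQ n) y \<ge> 0"
  unfolding poly_altdef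
  by (intro sum_nonneg mult_nonneg_nonneg QQ_coeff_nonneg zero_le_power)

lemma derivs_main:
  fixes \<phi> :: "real \<Rightarrow> real" and s :: real
  assumes d: "\<And>x. x \<in> I \<Longrightarrow> (\<phi> has_real_derivative s * (1 + (\<phi> x)^2) / 2) (at x)"
  assumes x: "x \<in> I"
  shows "((\<lambda>x. s^n * poly (QQ n) (\<phi> x)) has_real_derivative s^(Suc n) * poly (QQ (Suc n)) (\<phi> x)) (at x within I)"
proof -
  have "((\<lambda>x. s^n * poly (QQ n) (\<phi> x)) has_real_derivative
          s^n * (poly (pderiv (QQ n)) (\<phi> x) * (s * (1 + (\<phi> x)^2) / 2))) (at x)"
    by (intro DERIV_cmult DERIV_chain2[OF poly_DERIV] d x)
  moreover have "s^n * (poly (pderiv (QQ n)) (\<phi> x) * (s * (1 + (\<phi> x)^2) / 2))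
     = s^(Suc n) * poly (QQ (Suc n)) (\<phi> x)"
    by (simp add: algebra_simps power2_eq_square)
  ultimately show ?thesis
    by (metis has_field_derivative_at_within)
qed

lemma g_eq:
  assumes "sin (x/2) \<noteq> 0"
  shows "1 / (1 - cos x) = poly (QQ 0) (cot (x/2))"
proof -
  have c: "cos x = 1 - 2 * (sin (x/2))^2"
    using cos_double_sin[of "x/2"] by simp
  have "(cos (x/2))^2 = 1 - (sin (x/2))^2" by (simp add: cos_squared_eq)
  then show ?thesis using assms
    by (simp add: c cot_def field_simps power2_eq_square)
qed

lemma g_eq2:
  assumes "sin (x/2) \<noteq> 0"
  shows "1 / (1 - cos x) = poly (QQ 0) (- cot (x/2))"
  using g_eq[OF assms] by simp

lemma sin_half_pos: "0 < x \<Longrightarrow> x < 2*pi \<Longrightarrow> sin (x/2) > 0"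
  by (intro sin_gt_zero) auto

lemma cot_deriv:
  assumes "sin (x/2) \<noteq> 0"
  shows "((\<lambda>x. cot (x/2)) has_real_derivative (-1) * (1 + (cot (x/2))^2) / 2) (at x)"
proof -
  have "((\<lambda>x. cot (x/2)) has_real_derivative -inverse ((sin (x/2))\<^sup>2) * (1/2)) (at x)"
    by (rule DERIV_chain2[where f=cot and g="\<lambda>x. x/2" and x=x, OF DERIV_cot[OF assms]]) (auto intro!: derivative_eq_intros)
  moreover have "-inverse ((sin (x/2))\<^sup>2) * (1/2) = (-1) * (1 + (cot (x/2))^2) / 2"
  proof -
    have "(cos (x/2))^2 = 1 - (sin (x/2))^2" by (simp add: cos_squared_eq)
    then show ?thesis using assms by (simp add: cot_def field_simps power2_eq_square)
  qed
  ultimately show ?thesis by (metis DERIV_cong)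
qed

lemma mcot_deriv:
  assumes "sin (x/2) \<noteq> 0"
  shows "((\<lambda>x. - cot (x/2)) has_real_derivative 1 * (1 + (- cot (x/2))^2) / 2) (at x)"
  by (rule DERIV_cong[OF DERIV_minus[OF cot_deriv[OF assms]]]) (simp add: field_simps)

theorem theorem1:
  fixes g :: "real \<Rightarrow> real"
  defines "g \<equiv> (\<lambda>x. 1 / (1 - cos x))"
  shows "completely_monotonic_on g {0<..pi} \<and> absolutely_monotonic_on g {pi..<2*pi}"
proof
  show "completely_monotonic_on g {0<..pi}"
    unfolding completely_monotonic_on_def has_all_derivs_on_def
  proof (intro exI[of _ "\<lambda>n x. (-1)^n * poly (QQ n) (cot (x/2))"] conjI ballI allI)
    fix x assume x: "x \<in> {0<..pi}"
    then have s: "sin (x/2) \<noteq> 0" using sin_half_pos[of x] pi_gt_zero by auto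
    show "(-1::real)^0 * poly (QQ 0) (cot (x/2)) = g x" using g_eq[OF s] g_def by simp
  next
    fix n and x :: real assume x: "x \<in> {0<..pi}"
    show "((\<lambda>x. (-1)^n * poly (QQ n) (cot (x/2))) has_real_derivative
           (-1)^(Suc n) * poly (QQ (Suc n)) (cot (x/2))) (at x within {0<..pi})"
    proof (rule derivs_main[OF _ x])
      fix y assume y: "y \<in> {0<..pi}"
      then have s: "sin (y/2) \<noteq> 0" using sin_half_pos[of y] pi_gt_zero by auto
      show "((\<lambda>x. cot (x/2)) has_real_derivative (-1) * (1 + (cot (y/2))^2) / 2) (at y)"
        by (rule cot_deriv[OF s])
    qed
  next
    fix n and x :: real assume x: "x \<in> {0<..pi}"
    then have sp: "sin (x/2) > 0" using sin_half_pos[of x] pi_gt_zero by auto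
    have "cos (x/2) \<ge> 0" using x by (intro cos_ge_zero) auto
    then have "cot (x/2) \<ge> 0" using sp by (simp add: cot_def)
    then have "poly (QQ n) (cot (x/2)) \<ge> 0" by (rule QQ_nonneg)
    then show "0 \<le> (-1::real)^n * ((-1)^n * poly (QQ n) (cot (x/2)))"
      by (simp add: mult.assoc[symmetric] power_mult_distrib[symmetric])
  qed
next
  show "absolutely_monotonic_on g {pi..<2*pi}"
    unfolding absolutely_monotonic_on_def has_all_derivs_on_def
  proof (intro exI[of _ "\<lambda>n x. 1^n * poly (QQ n) (- cot (x/2))"] conjI ballI allI)
    fix x assume x: "x \<in> {pi..<2*pi}"
    then have s: "sin (x/2) \<noteq> 0" using sin_half_pos[of x] pi_gt_zero by auto
    show "(1::real)^0 * poly (QQ 0) (- cot (x/2)) = g x" using g_eq2[OF s] g_def by simp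
  next
    fix n and x :: real assume x: "x \<in> {pi..<2*pi}"
    show "((\<lambda>x. 1^n * poly (QQ n) (- cot (x/2))) has_real_derivative
           1^(Suc n) * poly (QQ (Suc n)) (- cot (x/2))) (at x within {pi..<2*pi})"
    proof (rule derivs_main[OF _ x])
      fix y assume y: "y \<in> {pi..<2*pi}"
      then have s: "sin (y/2) \<noteq> 0" using sin_half_pos[of y] pi_gt_zero by auto
      show "((\<lambda>x. - cot (x/2)) has_real_derivative 1 * (1 + (- cot (y/2))^2) / 2) (at y)"
        by (rule mcot_deriv[OF s])
    qed
  next
    fix n and x :: real assume x: "x \<in> {pi..<2*pi}"
    then have sp: "sin (x/2) > 0" using sin_half_pos[of x] pi_gt_zero by auto
    have "cos (pi - x/2) \<ge> 0" using x by (intro cos_ge_zero) auto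
    then have "cos (x/2) \<le> 0" by (simp add: cos_pi_minus)
    then have "- cot (x/2) \<ge> 0" using sp by (simp add: cot_def divide_nonpos_pos)
    then have "poly (QQ n) (- cot (x/2)) \<ge> 0" by (rule QQ_nonneg)
    then show "0 \<le> (1::real)^n * poly (QQ n) (- cot (x/2))" by simp
  qed
qed

end
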